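(* Let $Y\in\mathbb{R}^n$ satisfy $Y=X\beta+\sigma\xi$, where $X\in\mathbb{R}^{n\times p}$ is a deterministic matrix with columns $X_1,\dots,X_p$, $\beta\in\mathbb{R}^p$, $\sigma>0$ and $\xi\sim\mathcal{N}(0,\mathbb{I}_n)$. Let $q\ge1$ and let $\pi=\pi_1\otimes\cdots\otimes\pi_p$ be a prior on $\beta$ with independent components, $\pi_j$ being the law of $\beta_j$. Then $$\inf_{\hat T}\mathbb{E}_\pi\mathbf{E}_\beta\sum_{j=1}^p|\hat T_j(X,Y)-\beta_j|^q\ \ge\ \sum_{j=1}^p\inf_{\hat T_j}\mathbb{E}_{\pi_j}\mathbf{E}_{\beta_j}|\hat T_j(X_j,\tilde Y_j)-\beta_j|^q,$$ where $\tilde Y_j=Y-\sum_{i\ne j}X_i\beta_i=\beta_jX_j+\sigma\xi$, the infimum on the left is over all $\mathbb{R}^p$-valued measurable functions $\hat T=(\hat T_1,\dots,\hat T_p)$ of $(X,Y)$, and each infimum on the right is over all real-valued measurable functions $\hat T_j$ of $(X_j,\tilde Y_j)$.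
   Context: $\mathbf{E}_\beta$ denotes expectation over $\xi$ for fixed $\beta$; $\mathbb{E}_\pi$ denotes expectation over $\beta\sim\pi$ (resp. $\mathbb{E}_{\pi_j}$ over $\beta_j\sim\pi_j$). *)

theory Defs
  imports "HOL-Probability.Probability"
begin

definition gauss_noise :: "('n::finite \<Rightarrow> real) measure" where
  "gauss_noise = PiM UNIV (\<lambda>_. density lborel std_normal_density)"

definition obs :: "('n::finite \<Rightarrow> 'p::finite \<Rightarrow> real) \<Rightarrow> real \<Rightarrow> ('p \<Rightarrow> real) \<Rightarrow> ('n \<Rightarrow> real) \<Rightarrow> ('n \<Rightarrow> real)" where
  "obs X \<sigma> \<beta> \<xi> = (\<lambda>i. (\<Sum>j\<in>UNIV. X i j * \<beta> j) + \<sigma> * \<xi> i)"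

definition obs_j :: "('n::finite \<Rightarrow> 'p::finite \<Rightarrow> real) \<Rightarrow> real \<Rightarrow> 'p \<Rightarrow> real \<Rightarrow> ('n \<Rightarrow> real) \<Rightarrow> ('n \<Rightarrow> real)" where
  "obs_j X \<sigma> j b \<xi> = (\<lambda>i. b * X i j + \<sigma> * \<xi> i)"

end

theory Submission
  imports Defs
begin

lemma gauss_prob: "prob_space (gauss_noise :: ('n::finite \<Rightarrow> real) measure)"
  unfolding gauss_noise_def by (intro prob_space_PiM prob_space_normal_density) simp

lemma gauss_sets: "sets (gauss_noise :: ('n::finite \<Rightarrow> real) measure) = sets (PiM UNIV (\<lambda>_::'n. borel))"
  unfolding gauss_noise_def by (intro sets_PiM_cong) auto

theorem lemma2:
  fixes X :: "'n::finite \<Rightarrow> 'p::finite \<Rightarrow> real"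
    and \<sigma> q :: real
    and \<pi> :: "'p \<Rightarrow> real measure"
  assumes "\<sigma> > 0"
    and "q \<ge> 1"
    and "\<And>j. prob_space (\<pi> j)"
    and "\<And>j. sets (\<pi> j) = sets borel"
  shows "(INF T \<in> PiM UNIV (\<lambda>_::'n. borel) \<rightarrow>\<^sub>M PiM UNIV (\<lambda>_::'p. borel).
            \<integral>\<^sup>+ \<beta>. (\<integral>\<^sup>+ \<xi>. ennreal (\<Sum>j\<in>UNIV. \<bar>T (obs X \<sigma> \<beta> \<xi>) j - \<beta> j\<bar> powr q) \<partial>gauss_noise)
              \<partial>(PiM UNIV \<pi>))
       \<ge> (\<Sum>j\<in>UNIV. INF t \<in> borel_measurable (PiM UNIV (\<lambda>_::'n. borel)).
            \<integral>\<^sup>+ b. (\<integral>\<^sup>+ \<xi>. ennreal (\<bar>t (obs_j X \<sigma> j b \<xi>) - b\<bar> powr q) \<partial>gauss_noise) \<partial>(\<pi> j))"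
proof (rule INF_greatest)
  fix T :: "('n \<Rightarrow> real) \<Rightarrow> 'p \<Rightarrow> real" assume T: "T \<in> PiM UNIV (\<lambda>_::'n. borel) \<rightarrow>\<^sub>M PiM UNIV (\<lambda>_::'p. borel)"
  let ?N = "PiM UNIV (\<lambda>_::'n. borel)"
  let ?B = "PiM UNIV (\<lambda>_::'p. borel)"
  let ?G = "gauss_noise :: ('n \<Rightarrow> real) measure"
  interpret G: prob_space ?G by (rule gauss_prob)
  interpret P: product_prob_space \<pi> by (simp add: product_prob_space_def product_prob_space_axioms_def
      product_sigma_finite_def assms(3) prob_space_imp_sigma_finite)
  have PiS: "sets (PiM UNIV \<pi>) = sets ?B" by (intro sets_PiM_cong) (auto simp: assms(4))
  have Tj[measurable]: "(\<lambda>y. T y j) \<in> borel_measurable ?N" for j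
    using T by measurable
  have obsm: "(\<lambda>(\<beta>, \<xi>). obs X \<sigma> \<beta> \<xi>) \<in> (?B \<Otimes>\<^sub>M ?N) \<rightarrow>\<^sub>M ?N"
    unfolding obs_def
    apply (rule measurable_PiM_single')
     apply (simp add: split_beta')
     apply measurable
    done
  define f where "f j \<beta> \<xi> = ennreal (\<bar>T (obs X \<sigma> \<beta> \<xi>) j - \<beta> j\<bar> powr q)" for j \<beta> \<xi>
  have fm0: "(\<lambda>(\<beta>, \<xi>). f j \<beta> \<xi>) \<in> borel_measurable (?B \<Otimes>\<^sub>M ?N)" for j
    unfolding f_def using obsm by measurable
  have fm: "(\<lambda>(\<beta>, \<xi>). f j \<beta> \<xi>) \<in> borel_measurable (PiM UNIV \<pi> \<Otimes>\<^sub>M ?G)" for j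
    using fm0 by (subst measurable_cong_sets[OF sets_pair_measure_cong[OF PiS gauss_sets] refl]) 
  have inner_m: "(\<lambda>\<beta>. \<integral>\<^sup>+\<xi>. f j \<beta> \<xi> \<partial>?G) \<in> borel_measurable (PiM UNIV \<pi>)" for j
    using G.borel_measurable_nn_integral[OF fm] .
  have eq1: "(\<integral>\<^sup>+ \<beta>. (\<integral>\<^sup>+ \<xi>. ennreal (\<Sum>j\<in>UNIV. \<bar>T (obs X \<sigma> \<beta> \<xi>) j - \<beta> j\<bar> powr q) \<partial>?G) \<partial>(PiM UNIV \<pi>))
     = (\<integral>\<^sup>+ \<beta>. (\<Sum>j\<in>UNIV. \<integral>\<^sup>+ \<xi>. f j \<beta> \<xi> \<partial>?G) \<partial>(PiM UNIV \<pi>))"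
  proof (rule nn_integral_cong)
    fix \<beta> assume b: "\<beta> \<in> space (PiM UNIV \<pi>)"
    have "(\<integral>\<^sup>+ \<xi>. ennreal (\<Sum>j\<in>UNIV. \<bar>T (obs X \<sigma> \<beta> \<xi>) j - \<beta> j\<bar> powr q) \<partial>?G)
        = (\<integral>\<^sup>+ \<xi>. (\<Sum>j\<in>UNIV. f j \<beta> \<xi>) \<partial>?G)"
      unfolding f_def by (subst sum_ennreal) auto
    also have "\<dots> = (\<Sum>j\<in>UNIV. \<integral>\<^sup>+ \<xi>. f j \<beta> \<xi> \<partial>?G)"
      by (rule nn_integral_sum) (use measurable_Pair2[OF fm b] in simp)
    finally show "(\<integral>\<^sup>+ \<xi>. ennreal (\<Sum>j\<in>UNIV. \<bar>T (obs X \<sigma> \<beta> \<xi>) j - \<beta> j\<bar> powr q) \<partial>?G)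
        = (\<Sum>j\<in>UNIV. \<integral>\<^sup>+ \<xi>. f j \<beta> \<xi> \<partial>?G)" .
  qed
  also have "\<dots> = (\<Sum>j\<in>UNIV. \<integral>\<^sup>+ \<beta>. (\<integral>\<^sup>+ \<xi>. f j \<beta> \<xi> \<partial>?G) \<partial>(PiM UNIV \<pi>))"
    by (rule nn_integral_sum) (rule inner_m)
  finally have eq: "(\<integral>\<^sup>+ \<beta>. (\<integral>\<^sup>+ \<xi>. ennreal (\<Sum>j\<in>UNIV. \<bar>T (obs X \<sigma> \<beta> \<xi>) j - \<beta> j\<bar> powr q) \<partial>?G) \<partial>(PiM UNIV \<pi>))
     = (\<Sum>j\<in>UNIV. \<integral>\<^sup>+ \<beta>. (\<integral>\<^sup>+ \<xi>. f j \<beta> \<xi> \<partial>?G) \<partial>(PiM UNIV \<pi>))" .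
  show "(\<Sum>j\<in>UNIV. INF t \<in> borel_measurable ?N.
            \<integral>\<^sup>+ b. (\<integral>\<^sup>+ \<xi>. ennreal (\<bar>t (obs_j X \<sigma> j b \<xi>) - b\<bar> powr q) \<partial>gauss_noise) \<partial>(\<pi> j))
     \<le> (\<integral>\<^sup>+ \<beta>. (\<integral>\<^sup>+ \<xi>. ennreal (\<Sum>j\<in>UNIV. \<bar>T (obs X \<sigma> \<beta> \<xi>) j - \<beta> j\<bar> powr q) \<partial>?G) \<partial>(PiM UNIV \<pi>))"
    unfolding eq
  proof (rule sum_mono)
    fix j :: 'p
    define I where "I = (INF t \<in> borel_measurable ?N.
            \<integral>\<^sup>+ b. (\<integral>\<^sup>+ \<xi>. ennreal (\<bar>t (obs_j X \<sigma> j b \<xi>) - b\<bar> powr q) \<partial>?G) \<partial>(\<pi> j))"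
    let ?g = "\<lambda>\<beta>. \<integral>\<^sup>+ \<xi>. f j \<beta> \<xi> \<partial>?G"
    have U: "insert j (UNIV - {j}) = UNIV" by auto
    have ins: "integral\<^sup>N (PiM UNIV \<pi>) ?g = (\<integral>\<^sup>+ x. (\<integral>\<^sup>+ y. ?g (x(j := y)) \<partial>(\<pi> j)) \<partial>(PiM (UNIV - {j}) \<pi>))"
      using P.product_nn_integral_insert[of "UNIV - {j}" j ?g] inner_m[of j] by (simp add: U)
    have low: "I \<le> (\<integral>\<^sup>+ y. ?g (x(j := y)) \<partial>(\<pi> j))" for x
    proof -
      define c where "c i = (\<Sum>k\<in>UNIV - {j}. X i k * x k)" for i
      define t where "t y' = T (\<lambda>i. y' i + c i) j" for y'
      have sh: "(\<lambda>y' i. y' i + c i) \<in> ?N \<rightarrow>\<^sub>M ?N"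
        apply (rule measurable_PiM_single')
         apply measurable
        done
      have tm: "t \<in> borel_measurable ?N"
        unfolding t_def using measurable_comp[OF sh Tj[of j]] by (simp add: comp_def)
      have ob: "obs X \<sigma> (x(j := y)) \<xi> = (\<lambda>i. obs_j X \<sigma> j y \<xi> i + c i)" for y \<xi>
        unfolding obs_def obs_j_def c_def
        by (rule ext) (simp add: sum.remove[of UNIV j] algebra_simps)
      have "I \<le> (\<integral>\<^sup>+ b. (\<integral>\<^sup>+ \<xi>. ennreal (\<bar>t (obs_j X \<sigma> j b \<xi>) - b\<bar> powr q) \<partial>?G) \<partial>(\<pi> j))"
        unfolding I_def by (rule INF_lower[OF tm])
      also have "\<dots> = (\<integral>\<^sup>+ y. ?g (x(j := y)) \<partial>(\<pi> j))"
        unfolding f_def t_def ob by simp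
      finally show ?thesis .
    qed
    interpret Q: prob_space "PiM (UNIV - {j}) \<pi>" by (rule prob_space_PiM) (rule assms(3))
    have "I = (\<integral>\<^sup>+ x. I \<partial>(PiM (UNIV - {j}) \<pi>))"
      by (simp add: Q.emeasure_space_1)
    also have "\<dots> \<le> (\<integral>\<^sup>+ x. (\<integral>\<^sup>+ y. ?g (x(j := y)) \<partial>(\<pi> j)) \<partial>(PiM (UNIV - {j}) \<pi>))"
      by (rule nn_integral_mono) (rule low)
    finally show "I \<le> integral\<^sup>N (PiM UNIV \<pi>) ?g" unfolding ins .
  qed
qed

end
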